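(* Let $r\ge1$ and let $\mathbf{Y}^r$ be the $r$-fold Cartesian product of Young's lattice. For every $n\ge0$, the cokernel of the up map $U_n:\mathbb{Z}^{p_n}\to\mathbb{Z}^{p_{n+1}}$ of $\mathbf{Y}^r$ is a free abelian group.
   Context: Young's lattice $\mathbf{Y}$ is the poset of all integer partitions ordered by inclusion of Young diagrams, graded by size; $\mathbf{Y}^r$ has the componentwise order and rank equal to total size. With $P_n$ the set of rank-$n$ elements and $p_n=|P_n|$, the up map $U_n:\mathbb{Z}^{P_n}\to\mathbb{Z}^{P_{n+1}}$ sends each basis element to the sum of all elements covering it. *)

theory Defs
  imports "HOL-Algebra.Free_Abelian_Groups"
begin

(* A partition is encoded by its sequence of parts \<lambda>_0 \<ge> \<lambda>_1 \<ge> ... (nat \<Rightarrow> nat),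
   weakly decreasing and eventually zero. *)
definition is_partition :: "(nat \<Rightarrow> nat) \<Rightarrow> bool" where
  "is_partition l \<longleftrightarrow> (\<forall>i j. i \<le> j \<longrightarrow> l j \<le> l i) \<and> finite {i. l i \<noteq> 0}"

definition partition_size :: "(nat \<Rightarrow> nat) \<Rightarrow> nat" where
  "partition_size l = (\<Sum>i\<in>{i. l i \<noteq> 0}. l i)"

definition young_le :: "(nat \<Rightarrow> nat) \<Rightarrow> (nat \<Rightarrow> nat) \<Rightarrow> bool" where
  "young_le l m \<longleftrightarrow> (\<forall>i. l i \<le> m i)"

(* Elements of Y^r: r-tuples of partitions, encoded as functions on indices,
   with components at indices \<ge> r fixed to the empty partition. *)
definition Yr :: "nat \<Rightarrow> (nat \<Rightarrow> nat \<Rightarrow> nat) set" where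
  "Yr r = {L. (\<forall>k<r. is_partition (L k)) \<and> (\<forall>k\<ge>r. L k = (\<lambda>_. 0))}"

definition Yr_le :: "nat \<Rightarrow> (nat \<Rightarrow> nat \<Rightarrow> nat) \<Rightarrow> (nat \<Rightarrow> nat \<Rightarrow> nat) \<Rightarrow> bool" where
  "Yr_le r L M \<longleftrightarrow> (\<forall>k<r. young_le (L k) (M k))"

definition Yr_rank :: "nat \<Rightarrow> (nat \<Rightarrow> nat \<Rightarrow> nat) \<Rightarrow> nat" where
  "Yr_rank r L = (\<Sum>k<r. partition_size (L k))"

definition Yr_covers :: "nat \<Rightarrow> (nat \<Rightarrow> nat \<Rightarrow> nat) \<Rightarrow> (nat \<Rightarrow> nat \<Rightarrow> nat) \<Rightarrow> bool" where
  "Yr_covers r L M \<longleftrightarrow> L \<in> Yr r \<and> M \<in> Yr r \<and> Yr_le r L M \<and> L \<noteq> M \<and>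
     \<not> (\<exists>K\<in>Yr r. Yr_le r L K \<and> Yr_le r K M \<and> K \<noteq> L \<and> K \<noteq> M)"

definition Yr_level :: "nat \<Rightarrow> nat \<Rightarrow> (nat \<Rightarrow> nat \<Rightarrow> nat) set" where
  "Yr_level r n = {L \<in> Yr r. Yr_rank r L = n}"

(* Z^{P_n} is free_Abelian_group (Yr_level r n); the up map sends a basis
   element to the sum of all elements covering it, extended Z-linearly. *)
definition up_map :: "nat \<Rightarrow> nat \<Rightarrow> ((nat \<Rightarrow> nat \<Rightarrow> nat) \<Rightarrow>\<^sub>0 int) \<Rightarrow> ((nat \<Rightarrow> nat \<Rightarrow> nat) \<Rightarrow>\<^sub>0 int)" where
  "up_map r n = frag_extend (\<lambda>L. \<Sum>M\<in>{M \<in> Yr_level r (Suc n). Yr_covers r L M}. frag_of M)"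

definition up_cokernel :: "nat \<Rightarrow> nat \<Rightarrow> ((nat \<Rightarrow> nat \<Rightarrow> nat) \<Rightarrow>\<^sub>0 int) set monoid" where
  "up_cokernel r n = free_Abelian_group (Yr_level r (Suc n)) Mod
     (up_map r n ` carrier (free_Abelian_group (Yr_level r n)))"

(* A group is free abelian iff it is abelian and isomorphic to the free abelian
   group on some set (of the same element type as the group, which always
   suffices since a basis lies inside the carrier). *)
definition free_abelian :: "('a, 'b) monoid_scheme \<Rightarrow> bool" where
  "free_abelian G \<longleftrightarrow> comm_group G \<and> (\<exists>B :: 'a set. G \<cong> free_Abelian_group B)"

end

theory Submission
  imports Defs
begin


lemma abstract_quot:
  fixes g :: "('b \<Rightarrow>\<^sub>0 int) \<Rightarrow> ('a \<Rightarrow>\<^sub>0 int)"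
  assumes hom: "g \<in> hom (free_Abelian_group Q) (free_Abelian_group P)"
  and CP: "C \<subseteq> P"
  and span: "\<And>x. x \<in> carrier (free_Abelian_group P) \<Longrightarrow> \<exists>c. Poly_Mapping.keys c \<subseteq> C \<and> x - c \<in> g ` carrier (free_Abelian_group Q)"
  and inter: "\<And>c. Poly_Mapping.keys c \<subseteq> C \<Longrightarrow> c \<in> g ` carrier (free_Abelian_group Q) \<Longrightarrow> c = 0"
  shows "free_abelian (free_Abelian_group P Mod (g ` carrier (free_Abelian_group Q)))"
proof -
  let ?F = "free_Abelian_group P"
  let ?H = "g ` carrier (free_Abelian_group Q)"
  have gh: "group_hom (free_Abelian_group Q) ?F g"
    using hom by (simp add: group_hom_def group_hom_axioms_def)
  have sub: "subgroup ?H ?F"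
    using group_hom.img_is_subgroup[OF gh] .
  have cg: "comm_group (?F Mod ?H)"
    using comm_group.abelian_FactGroup[OF abelian_free_Abelian_group sub] .
  have nor: "?H \<lhd> ?F"
    using comm_group.normal_iff_subgroup[OF abelian_free_Abelian_group] sub by blast
  define \<psi> where "\<psi> = (\<lambda>c. ?H #>\<^bsub>?F\<^esub> c)"
  have carrC: "c \<in> carrier ?F" if "c \<in> carrier (free_Abelian_group C)" for c
    using that CP by auto
  have hom\<psi>: "\<psi> \<in> hom (free_Abelian_group C) (?F Mod ?H)"
  proof (rule homI)
    fix c assume "c \<in> carrier (free_Abelian_group C)"
    then show "\<psi> c \<in> carrier (?F Mod ?H)"
      using carrC by (auto simp: \<psi>_def carrier_FactGroup)
  next
    fix c d assume "c \<in> carrier (free_Abelian_group C)" "d \<in> carrier (free_Abelian_group C)"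
    then show "\<psi> (c \<otimes>\<^bsub>free_Abelian_group C\<^esub> d) = \<psi> c \<otimes>\<^bsub>?F Mod ?H\<^esub> \<psi> d"
      using carrC normal.rcos_sum[OF nor, of c d] by (simp add: \<psi>_def)
  qed
  have inj: "inj_on \<psi> (carrier (free_Abelian_group C))"
  proof (rule inj_onI)
    fix c d assume c: "c \<in> carrier (free_Abelian_group C)" and d: "d \<in> carrier (free_Abelian_group C)"
      and eq: "\<psi> c = \<psi> d"
    have "c \<in> ?H #>\<^bsub>?F\<^esub> d"
      using group.repr_independenceD[OF group_free_Abelian_group sub, of c d] eq carrC[OF c]
      by (simp add: \<psi>_def)
    then have "c \<otimes>\<^bsub>?F\<^esub> inv\<^bsub>?F\<^esub> d \<in> ?H"
      using subgroup.rcos_module_imp[OF sub group_free_Abelian_group carrC[OF d]] by blast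
    then have "c - d \<in> ?H" using carrC[OF d] by simp
    moreover have "Poly_Mapping.keys (c - d) \<subseteq> C"
      using c d keys_diff by fastforce
    ultimately have "c - d = 0" using inter by blast
    then show "c = d" by simp
  qed
  have surj: "\<psi> ` carrier (free_Abelian_group C) = carrier (?F Mod ?H)"
  proof
    show "\<psi> ` carrier (free_Abelian_group C) \<subseteq> carrier (?F Mod ?H)"
      using hom\<psi> by (auto simp: hom_def)
  next
    show "carrier (?F Mod ?H) \<subseteq> \<psi> ` carrier (free_Abelian_group C)"
    proof
      fix X assume "X \<in> carrier (?F Mod ?H)"
      then obtain x where x: "x \<in> carrier ?F" and X: "X = ?H #>\<^bsub>?F\<^esub> x"
        by (auto simp: carrier_FactGroup)
      obtain c where c: "Poly_Mapping.keys c \<subseteq> C" "x - c \<in> ?H"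
        using span[OF x] by blast
      have cF: "c \<in> carrier ?F" using c CP by auto
      have "x \<otimes>\<^bsub>?F\<^esub> inv\<^bsub>?F\<^esub> c \<in> ?H" using c cF by simp
      then have "x \<in> ?H #>\<^bsub>?F\<^esub> c"
        using subgroup.rcos_module_rev[OF sub group_free_Abelian_group cF x] by blast
      then have "?H #>\<^bsub>?F\<^esub> c = ?H #>\<^bsub>?F\<^esub> x"
        using group.repr_independence[OF group_free_Abelian_group _ cF sub] by blast
      then show "X \<in> \<psi> ` carrier (free_Abelian_group C)"
        using X c by (auto simp: \<psi>_def)
    qed
  qed
  have isoP: "\<psi> \<in> iso (free_Abelian_group C) (?F Mod ?H)"
    using hom\<psi> inj surj by (simp add: iso_def bij_betw_def)
  then have i1: "?F Mod ?H \<cong> free_Abelian_group C"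
  proof -
    have "free_Abelian_group C \<cong> ?F Mod ?H" using isoP unfolding is_iso_def by blast
    then show ?thesis using group.iso_sym[OF group_free_Abelian_group] by blast
  qed
  define B where "B = (\<lambda>c. {frag_of c}) ` C"
  have "B \<approx> C" unfolding B_def
    by (rule inj_on_image_eqpoll_self) (auto simp: inj_on_def frag_of_eq)
  then have "free_Abelian_group C \<cong> free_Abelian_group B"
    using isomorphic_free_Abelian_groups eqpoll_sym by blast
  then have "?F Mod ?H \<cong> free_Abelian_group B" using i1 iso_trans by blast
  then show ?thesis using cg unfolding free_abelian_def by blast
qed



definition phi :: "(nat \<Rightarrow> nat \<Rightarrow> nat) \<Rightarrow> (nat \<Rightarrow> nat \<Rightarrow> nat)" where
  "phi L = L(0 := (L 0)(0 := Suc (L 0 0)))"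

lemma phi_00 [simp]: "phi L 0 0 = Suc (L 0 0)"
  by (simp add: phi_def)

lemma phi_other: "k \<noteq> 0 \<or> i \<noteq> 0 \<Longrightarrow> phi L k i = L k i"
  by (auto simp: phi_def)

lemma phi_inj: "phi L = phi L' \<Longrightarrow> L = L'"
proof -
  assume eq: "phi L = phi L'"
  show "L = L'"
  proof (intro ext)
    fix k i
    show "L k i = L' k i"
    proof (cases "k = 0 \<and> i = 0")
      case True
      then show ?thesis using fun_cong[OF fun_cong[OF eq, of 0], of 0] by simp
    next
      case False
      then show ?thesis using fun_cong[OF fun_cong[OF eq, of k], of i] by (simp add: phi_other)
    qed
  qed
qed

lemma partition_size_superset:
  assumes "finite T" "{i. l i \<noteq> 0} \<subseteq> T"
  shows "partition_size l = sum l T"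
  unfolding partition_size_def
  by (rule sum.mono_neutral_left) (use assms in auto)

lemma is_partition_incr:
  assumes "is_partition l"
  shows "is_partition (l(0 := Suc (l 0)))" and
    "partition_size (l(0 := Suc (l 0))) = Suc (partition_size l)"
proof -
  have fin: "finite {i. l i \<noteq> 0}" using assms by (simp add: is_partition_def)
  have dec: "\<And>i j. i \<le> j \<Longrightarrow> l j \<le> l i" using assms by (simp add: is_partition_def)
  have sub: "{i. (l(0 := Suc (l 0))) i \<noteq> 0} \<subseteq> insert 0 {i. l i \<noteq> 0}" by auto
  show "is_partition (l(0 := Suc (l 0)))"
    unfolding is_partition_def
  proof
    show "\<forall>i j. i \<le> j \<longrightarrow> (l(0 := Suc (l 0))) j \<le> (l(0 := Suc (l 0))) i"
      using dec by (auto simp: le_Suc_eq)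
    show "finite {i. (l(0 := Suc (l 0))) i \<noteq> 0}"
      using fin sub finite_subset by blast
  qed
  let ?T = "insert 0 {i. l i \<noteq> 0}"
  have "partition_size (l(0 := Suc (l 0))) = sum (l(0 := Suc (l 0))) ?T"
    using fin sub by (intro partition_size_superset) auto
  also have "\<dots> = Suc (l 0) + sum (l(0 := Suc (l 0))) (?T - {0})"
    using fin by (subst sum.remove[of _ 0]) auto
  also have "sum (l(0 := Suc (l 0))) (?T - {0}) = sum l (?T - {0})"
    by (rule sum.cong) auto
  also have "Suc (l 0) + sum l (?T - {0}) = Suc (sum l ?T)"
    using fin by (subst (2) sum.remove[of _ 0]) auto
  also have "sum l ?T = partition_size l"
    using fin by (intro partition_size_superset[symmetric]) auto
  finally show "partition_size (l(0 := Suc (l 0))) = Suc (partition_size l)" .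
qed

lemma phi_Yr:
  assumes "r \<ge> 1" "L \<in> Yr r"
  shows "phi L \<in> Yr r"
proof -
  have "is_partition (L 0)" using assms by (simp add: Yr_def)
  then have "is_partition ((L 0)(0 := Suc (L 0 0)))" by (rule is_partition_incr)
  then show ?thesis using assms by (auto simp: Yr_def phi_def)
qed

lemma phi_rank:
  assumes "r \<ge> 1" "L \<in> Yr r"
  shows "Yr_rank r (phi L) = Suc (Yr_rank r L)"
proof -
  have p: "is_partition (L 0)" using assms by (simp add: Yr_def)
  have "Yr_rank r (phi L) = partition_size (phi L 0) + (\<Sum>k\<in>{..<r} - {0}. partition_size (phi L k))"
    unfolding Yr_rank_def using assms by (subst sum.remove[of _ 0]) auto
  also have "(\<Sum>k\<in>{..<r} - {0}. partition_size (phi L k)) = (\<Sum>k\<in>{..<r} - {0}. partition_size (L k))"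
    by (rule sum.cong) (auto simp: phi_def)
  also have "partition_size (phi L 0) = Suc (partition_size (L 0))"
    using is_partition_incr(2)[OF p] by (simp add: phi_def)
  also have "Suc (partition_size (L 0)) + (\<Sum>k\<in>{..<r} - {0}. partition_size (L k)) = Suc (Yr_rank r L)"
    unfolding Yr_rank_def using assms by (subst (2) sum.remove[of _ 0]) auto
  finally show ?thesis .
qed

lemma phi_level:
  assumes "r \<ge> 1" "L \<in> Yr_level r n"
  shows "phi L \<in> Yr_level r (Suc n)"
  using assms phi_Yr phi_rank by (auto simp: Yr_level_def)

lemma le_phi: "Yr_le r L (phi L)"
  by (auto simp: Yr_le_def young_le_def phi_def)

lemma phi_neq: "phi L \<noteq> L"
  by (metis n_not_Suc_n phi_00)

lemma phi_covers:
  assumes "r \<ge> 1" "L \<in> Yr r"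
  shows "Yr_covers r L (phi L)"
  unfolding Yr_covers_def
proof (intro conjI)
  show "L \<in> Yr r" "phi L \<in> Yr r" "Yr_le r L (phi L)" "L \<noteq> phi L"
    using assms phi_Yr le_phi phi_neq by metis+
  show "\<not> (\<exists>K\<in>Yr r. Yr_le r L K \<and> Yr_le r K (phi L) \<and> K \<noteq> L \<and> K \<noteq> phi L)"
  proof
    assume "\<exists>K\<in>Yr r. Yr_le r L K \<and> Yr_le r K (phi L) \<and> K \<noteq> L \<and> K \<noteq> phi L"
    then obtain K where K: "K \<in> Yr r" "Yr_le r L K" "Yr_le r K (phi L)" "K \<noteq> L" "K \<noteq> phi L"
      by blast
    have oth: "K k i = L k i" if "k \<noteq> 0 \<or> i \<noteq> 0" for k i
    proof (cases "k < r")
      case True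
      then show ?thesis using K(2,3) that phi_other[OF that, of L]
        unfolding Yr_le_def young_le_def by (metis le_antisym)
    next
      case False
      then show ?thesis using K(1) assms(2) by (auto simp: Yr_def)
    qed
    have r0: "0 < r" using assms(1) by simp
    have "K 0 0 \<ge> L 0 0" "K 0 0 \<le> phi L 0 0"
      using K(2,3) r0 unfolding Yr_le_def young_le_def by blast+
    then have "K 0 0 \<ge> L 0 0" "K 0 0 \<le> Suc (L 0 0)" by simp_all
    then consider "K 0 0 = L 0 0" | "K 0 0 = Suc (L 0 0)" by linarith
    then show False
    proof cases
      case 1
      have "K = L" by (intro ext) (metis 1 oth)
      then show False using K by simp
    next
      case 2
      have "K = phi L" by (intro ext) (metis 2 oth phi_00 phi_other)
      then show False using K by simp
    qed
  qed
qed

lemma covers_phi: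
  assumes "r \<ge> 1" "Yr_covers r L M" "L 0 0 < M 0 0"
  shows "M = phi L"
proof -
  have L: "L \<in> Yr r" and M: "M \<in> Yr r" and le: "Yr_le r L M"
    using assms by (auto simp: Yr_covers_def)
  have "Yr_le r (phi L) M"
    using le assms(1,3) unfolding Yr_le_def young_le_def
    by (metis Suc_leI phi_00 phi_other)
  then show ?thesis
    using assms(2) phi_Yr[OF assms(1) L] le_phi phi_neq unfolding Yr_covers_def by blast
qed

lemma part_bound:
  assumes "is_partition l" "partition_size l \<le> m"
  shows "l i \<le> m" and "m \<le> i \<Longrightarrow> l i = 0"
proof -
  have fin: "finite {i. l i \<noteq> 0}" using assms by (simp add: is_partition_def)
  have dec: "\<And>i j. i \<le> j \<Longrightarrow> l j \<le> l i" using assms by (simp add: is_partition_def)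
  show "l i \<le> m"
  proof (cases "l i = 0")
    case False
    then have "l i \<le> partition_size l" unfolding partition_size_def
      using fin by (intro member_le_sum) auto
    then show ?thesis using assms by simp
  qed simp
  show "l i = 0" if "m \<le> i"
  proof (rule ccontr)
    assume "l i \<noteq> 0"
    then have pos: "\<And>j. j \<le> i \<Longrightarrow> l j \<ge> 1" using dec by (metis less_one not_le le_trans)
    have "{..i} \<subseteq> {i. l i \<noteq> 0}" using pos by fastforce
    then have "sum l {..i} \<le> partition_size l" unfolding partition_size_def
      using fin by (intro sum_mono2) auto
    moreover have "sum (\<lambda>_. 1::nat) {..i} \<le> sum l {..i}"
      using pos by (intro sum_mono) auto
    ultimately show False using assms that by simp
  qed
qed

lemma finite_level: "finite (Yr_level r m)"
proof -
  define F where "F = {l::nat\<Rightarrow>nat. \<forall>i. (i \<in> {..<m} \<longrightarrow> l i \<in> {..m}) \<and> (i \<notin> {..<m} \<longrightarrow> l i = 0)}"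
  have fF: "finite F" unfolding F_def by (rule finite_set_of_finite_funs) auto
  have fin: "finite {L. \<forall>k. (k \<in> {..<r} \<longrightarrow> L k \<in> F) \<and> (k \<notin> {..<r} \<longrightarrow> L k = (\<lambda>_. 0))}"
    by (rule finite_set_of_finite_funs) (use fF in auto)
  have "Yr_level r m \<subseteq> {L. \<forall>k. (k \<in> {..<r} \<longrightarrow> L k \<in> F) \<and> (k \<notin> {..<r} \<longrightarrow> L k = (\<lambda>_. 0))}"
  proof (rule subsetI, rule CollectI, rule allI)
    fix L k assume L: "L \<in> Yr_level r m"
    show "(k \<in> {..<r} \<longrightarrow> L k \<in> F) \<and> (k \<notin> {..<r} \<longrightarrow> L k = (\<lambda>_. 0))"
    proof (intro conjI impI)
      assume k: "k \<in> {..<r}"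
      have p: "is_partition (L k)" using L k by (auto simp: Yr_level_def Yr_def)
      have "partition_size (L k) \<le> Yr_rank r L"
        unfolding Yr_rank_def using k by (intro member_le_sum) auto
      then have s: "partition_size (L k) \<le> m" using L by (simp add: Yr_level_def)
      show "L k \<in> F" unfolding F_def using part_bound[OF p s] by auto
    next
      assume "k \<notin> {..<r}" then show "L k = (\<lambda>_. 0)" using L by (auto simp: Yr_level_def Yr_def)
    qed
  qed
  then show ?thesis using fin finite_subset by blast
qed



context
  fixes r n :: nat
  assumes r1: "r \<ge> 1"
begin

abbreviation "PP \<equiv> Yr_level r (Suc n)"
abbreviation "QQ \<equiv> Yr_level r n"
abbreviation "AA L \<equiv> {M \<in> PP. Yr_covers r L M}"
abbreviation "CC \<equiv> PP - phi ` QQ"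
abbreviation "HH \<equiv> up_map r n ` carrier (free_Abelian_group QQ)"

lemma finA: "finite (AA L)"
  using finite_level[of r "Suc n"] by simp

lemma up_of: "up_map r n (frag_of L) = (\<Sum>M\<in>AA L. frag_of M)"
  by (simp add: up_map_def)

lemma lookup_f: "Poly_Mapping.lookup (\<Sum>M\<in>AA L. frag_of M) M = (if M \<in> AA L then 1 else 0)"
  using finA[of L] by (simp add: lookup_sum)

lemma lookup_up:
  "Poly_Mapping.lookup (up_map r n x) M
     = (\<Sum>L\<in>Poly_Mapping.keys x. Poly_Mapping.lookup x L * (if M \<in> AA L then 1 else 0))"
proof -
  have "Poly_Mapping.lookup (up_map r n x) M
     = (\<Sum>L\<in>Poly_Mapping.keys x. Poly_Mapping.lookup (frag_cmul (Poly_Mapping.lookup x L) (\<Sum>M\<in>AA L. frag_of M)) M)"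
    by (simp only: up_map_def frag_extend_def lookup_sum)
  also have "\<dots> = (\<Sum>L\<in>Poly_Mapping.keys x. Poly_Mapping.lookup x L * (if M \<in> AA L then 1 else 0))"
    by (simp only: lookup_frag_cmul lookup_f)
  finally show ?thesis .
qed

lemma up_hom: "up_map r n \<in> hom (free_Abelian_group QQ) (free_Abelian_group PP)"
proof (rule homI)
  fix x assume "x \<in> carrier (free_Abelian_group QQ)"
  have "Poly_Mapping.keys (up_map r n x) \<subseteq> PP"
  proof -
    have "Poly_Mapping.keys (up_map r n x) \<subseteq> (\<Union>L \<in> Poly_Mapping.keys x. Poly_Mapping.keys (\<Sum>M\<in>AA L. frag_of M))"
      unfolding up_map_def by (rule keys_frag_extend)
    also have "\<dots> \<subseteq> PP"
      using keys_sum by fastforce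
    finally show ?thesis .
  qed
  then show "up_map r n x \<in> carrier (free_Abelian_group PP)" by simp
next
  fix x y show "up_map r n (x \<otimes>\<^bsub>free_Abelian_group QQ\<^esub> y) =
     up_map r n x \<otimes>\<^bsub>free_Abelian_group PP\<^esub> up_map r n y"
    by (simp add: up_map_def frag_extend_add)
qed

lemma inter:
  assumes c: "Poly_Mapping.keys c \<subseteq> CC" and cH: "c \<in> HH"
  shows "c = 0"
proof -
  obtain x where x: "Poly_Mapping.keys x \<subseteq> QQ" and cx: "c = up_map r n x"
    using cH by auto
  have "x = 0"
  proof (rule ccontr)
    assume "x \<noteq> 0"
    then have ne: "Poly_Mapping.keys x \<noteq> {}" by simp
    let ?m = "Max ((\<lambda>L. L 0 0) ` Poly_Mapping.keys x)"
    have "?m \<in> (\<lambda>L. L 0 0) ` Poly_Mapping.keys x" using ne by (intro Max_in) auto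
    then obtain L where L: "L \<in> Poly_Mapping.keys x" "L 0 0 = ?m" by auto
    have mx: "L' 0 0 \<le> L 0 0" if "L' \<in> Poly_Mapping.keys x" for L'
      using L that by auto
    have LQ: "L \<in> QQ" using L x by auto
    have pA: "phi L \<in> AA L"
      using phi_level[OF r1 LQ] phi_covers[OF r1] LQ by (auto simp: Yr_level_def)
    have other: "phi L \<notin> AA L'" if "L' \<in> Poly_Mapping.keys x" "L' \<noteq> L" for L'
    proof
      assume "phi L \<in> AA L'"
      then have cov: "Yr_covers r L' (phi L)" by simp
      have "L' 0 0 < phi L 0 0" using mx[OF that(1)] by simp
      then have "phi L = phi L'" using covers_phi[OF r1 cov] by simp
      then show False using phi_inj that by blast
    qed
    let ?t = "\<lambda>L'. Poly_Mapping.lookup x L' * (if phi L \<in> AA L' then 1 else 0)"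
    have "Poly_Mapping.lookup c (phi L) = (\<Sum>L'\<in>Poly_Mapping.keys x. ?t L')"
      by (simp only: cx lookup_up)
    also have "\<dots> = ?t L + (\<Sum>L'\<in>Poly_Mapping.keys x - {L}. ?t L')"
      by (rule sum.remove) (use L(1) in auto)
    also have "(\<Sum>L'\<in>Poly_Mapping.keys x - {L}. ?t L') = 0"
    proof (rule sum.neutral, rule ballI)
      fix L' assume "L' \<in> Poly_Mapping.keys x - {L}"
      then have "phi L \<notin> AA L'" using other by blast
      then show "?t L' = 0" by (simp only: if_False mult_zero_right)
    qed
    also have "?t L = Poly_Mapping.lookup x L" using pA by (simp only: if_True mult_1_right)
    finally have "Poly_Mapping.lookup c (phi L) = Poly_Mapping.lookup x L" by simp
    moreover have "phi L \<notin> Poly_Mapping.keys c" using c LQ by auto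
    ultimately show False using L(1) by (simp add: in_keys_iff)
  qed
  then show ?thesis using cx by (simp add: up_map_def)
qed

definition RR where "RR = {x. \<exists>c. Poly_Mapping.keys c \<subseteq> CC \<and> x - c \<in> HH}"

lemma H_diff: "a \<in> HH \<Longrightarrow> b \<in> HH \<Longrightarrow> a - b \<in> HH"
proof -
  assume "a \<in> HH" "b \<in> HH"
  then obtain u v where "u \<in> carrier (free_Abelian_group QQ)" "v \<in> carrier (free_Abelian_group QQ)"
    "a = up_map r n u" "b = up_map r n v" by auto
  moreover have "u - v \<in> carrier (free_Abelian_group QQ)"
    using calculation keys_diff by fastforce
  moreover have "up_map r n u - up_map r n v = up_map r n (u - v)"
    by (simp only: up_map_def frag_extend_diff)
  ultimately show ?thesis by (metis image_eqI)
qed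

lemma H_zero: "0 \<in> HH"
proof -
  have "up_map r n 0 = 0" by (simp add: up_map_def)
  moreover have "(0::_ \<Rightarrow>\<^sub>0 int) \<in> carrier (free_Abelian_group QQ)" by simp
  ultimately show ?thesis by (metis image_eqI)
qed

lemma H_add: "a \<in> HH \<Longrightarrow> b \<in> HH \<Longrightarrow> a + b \<in> HH"
  by (metis H_diff H_zero diff_0 diff_minus_eq_add)

lemma R_diff: "x \<in> RR \<Longrightarrow> y \<in> RR \<Longrightarrow> x - y \<in> RR"
proof -
  assume "x \<in> RR" "y \<in> RR"
  then obtain c d where c: "Poly_Mapping.keys c \<subseteq> CC" and xc: "x - c \<in> HH"
    and d: "Poly_Mapping.keys d \<subseteq> CC" and yd: "y - d \<in> HH" unfolding RR_def by blast
  have eq: "(x - y) - (c - d) = (x - c) - (y - d)" by (simp add: algebra_simps)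
  have cd: "Poly_Mapping.keys (c - d) \<subseteq> CC"
    using c d keys_diff[of c d] by blast
  have "(x - c) - (y - d) \<in> HH" by (rule H_diff[OF xc yd])
  then have "(x - y) - (c - d) \<in> HH" by (simp only: eq)
  then show ?thesis unfolding RR_def using cd by blast
qed

lemma H_R: "x \<in> HH \<Longrightarrow> x \<in> RR"
  unfolding RR_def by (rule CollectI, rule exI[of _ 0]) simp

lemma R_zero: "0 \<in> RR" using H_R H_zero by blast

lemma R_add: "x \<in> RR \<Longrightarrow> y \<in> RR \<Longrightarrow> x + y \<in> RR"
  by (metis R_diff R_zero diff_0 diff_minus_eq_add)

lemma R_sum: "(\<And>i. i \<in> I \<Longrightarrow> h i \<in> RR) \<Longrightarrow> sum h I \<in> RR"
  by (induction I rule: infinite_finite_induct) (auto simp: R_zero R_add)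

lemma R_C: "M \<in> CC \<Longrightarrow> frag_of M \<in> RR"
  unfolding RR_def using H_zero by (intro CollectI exI[of _ "frag_of M"]) auto

lemma R_phi: "\<forall>L \<in> QQ. L 0 0 = k \<longrightarrow> frag_of (phi L) \<in> RR"
proof (induction k rule: less_induct)
  case (less k)
  show ?case
  proof (intro ballI impI)
    fix L assume LQ: "L \<in> QQ" and Lk: "L 0 0 = k"
    have pA: "phi L \<in> AA L"
      using phi_level[OF r1 LQ] phi_covers[OF r1] LQ by (auto simp: Yr_level_def)
    have fH: "(\<Sum>M\<in>AA L. frag_of M) \<in> HH"
    proof -
      have "frag_of L \<in> carrier (free_Abelian_group QQ)" using LQ by simp
      then show ?thesis using up_of[of L] by (metis image_eqI)
    qed
    have split: "(\<Sum>M\<in>AA L. frag_of M) = frag_of (phi L) + (\<Sum>M\<in>AA L - {phi L}. frag_of M)"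
      using finA[of L] pA by (subst sum.remove[of _ "phi L"]) auto
    have rest: "(\<Sum>M\<in>AA L - {phi L}. frag_of M) \<in> RR"
    proof (rule R_sum)
      fix M assume M: "M \<in> AA L - {phi L}"
      show "frag_of M \<in> RR"
      proof (cases "M \<in> phi ` QQ")
        case False
        then show ?thesis using M by (intro R_C) auto
      next
        case True
        then obtain L' where L': "L' \<in> QQ" "M = phi L'" by auto
        have "\<not> L 0 0 < M 0 0" using M covers_phi[OF r1, of L M] by auto
        then have "L' 0 0 < k" using L' Lk by simp
        then show ?thesis using less L' by blast
      qed
    qed
    have "frag_of (phi L) = (\<Sum>M\<in>AA L. frag_of M) - (\<Sum>M\<in>AA L - {phi L}. frag_of M)"
      using split by simp
    then show "frag_of (phi L) \<in> RR" using R_diff[OF H_R[OF fH] rest] by simp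
  qed
qed

lemma span:
  assumes "x \<in> carrier (free_Abelian_group PP)"
  shows "\<exists>c. Poly_Mapping.keys c \<subseteq> CC \<and> x - c \<in> HH"
proof -
  have "x \<in> RR"
  proof (rule free_Abelian_group_induct[of x PP "\<lambda>x. x \<in> RR"])
    show "Poly_Mapping.keys x \<subseteq> PP" using assms by simp
    show "0 \<in> RR" by (rule R_zero)
    show "\<And>x y. x \<in> RR \<Longrightarrow> y \<in> RR \<Longrightarrow> x - y \<in> RR" by (rule R_diff)
    fix M assume M: "M \<in> PP"
    show "frag_of M \<in> RR"
    proof (cases "M \<in> phi ` QQ")
      case False then show ?thesis using M by (intro R_C) auto
    next
      case True then show ?thesis using R_phi by blast
    qed
  qed
  then show ?thesis by (simp add: RR_def)
qed

theorem main: "free_abelian (up_cokernel r n)"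
  unfolding up_cokernel_def
  by (rule abstract_quot[OF up_hom _ span inter]) auto

end


theorem proposition6p5:
  fixes r n :: nat
  assumes "r \<ge> 1"
  shows "free_abelian (up_cokernel r n)"
  using main[OF assms] .

end
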